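(* Let $T:X\rightrightarrows X^*$ be a pseudomonotone operator with $\mathrm{dom}(T)$ convex. Then $(\widehat{T})^\rho_D=T^\rho_D$.
   Context: $X$ is a real Banach space with dual $X^*$ and pairing $\langle x,x^*\rangle=x^*(x)$. A multivalued operator $T:X\rightrightarrows X^*$ is identified with its graph $T\subset X\times X^*$; $T(x)=\{x^*:(x,x^* )\in T\}$, $\mathrm{dom}(T)=\{x:T(x)\ne\emptyset\}$, $Z_T=\{x:0\in T(x)\}$. For $A\subset X^*$, $\operatorname{cone}_\circ(A)=\{tv:t>0,v\in A\}$. For $C\subset X$, $N_C(x)=\{x^*: \langle y-x,x^*\rangle\le0\ \forall y\in C\}$. For $(x,x^* ),(y,y^* )\in X\times X^*$, write $(x,x^* )\sim_p(y,y^* )$ if either $\min\{\langle x-y,y^*\rangle,\langle y-x,x^*\rangle\}<0$ or $\langle x-y,y^*\rangle=\langle y-x,x^*\rangle=0$. The pseudomonotone polar is $T^\rho=\{(x,x^* ): (x,x^* )\sim_p(y,y^* )\ \forall (y,y^* )\in T\}$, and $T^\rho_D$ denotes its restriction to $\mathrm{dom}(T)$; likewise $(\widehat T)^\rho_D$ is the restriction of $(\widehat T)^\rho$ to $\mathrm{dom}(\widehat T)=\mathrm{dom}(T)$. $T$ is pseudomonotone if for all $(x,x^* ),(y,y^* )\in T$, $\langle y-x,x^*\rangle\ge0$ implies $\langle y-x,y^*\rangle\ge0$. For $x\in Z_T$, $L(T,x)=\{y\in X:\exists y^*\in T(y),\ \langle x-y,y^*\rangle\ge0\}$, and $\widehat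 T(x)=N_{L(T,x)}(x)$ if $x\in Z_T$, $\widehat T(x)=\operatorname{cone}_\circ(T(x))$ if $x\in\mathrm{dom}(T)\setminus Z_T$, $\widehat T(x)=\emptyset$ if $x\notin\mathrm{dom}(T)$. *)

theory Defs
  imports "HOL-Analysis.Analysis"
begin

text \<open>X is a real Banach space ('a::banach); its dual X* is the space of bounded
linear functionals blinfun to real. A multivalued operator is its graph,
a set of pairs. The pairing is blinfun_apply.\<close>

type_synonym 'a mop = "('a \<times> ('a \<Rightarrow>\<^sub>L real)) set"

definition op_val :: "'a mop \<Rightarrow> 'a \<Rightarrow> ('a \<Rightarrow>\<^sub>L real) set" where
  "op_val T x = {f. (x, f) \<in> T}"

definition op_dom :: "'a mop \<Rightarrow> 'a set" where
  "op_dom T = {x. op_val T x \<noteq> {}}"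

definition op_zeros :: "('a::real_normed_vector) mop \<Rightarrow> 'a set" where
  "op_zeros T = {x. 0 \<in> op_val T x}"

definition open_cone :: "('a::real_vector) set \<Rightarrow> 'a set" where
  "open_cone A = {t *\<^sub>R v | t v. t > 0 \<and> v \<in> A}"

definition dual_normal_cone :: "('a::real_normed_vector) set \<Rightarrow> 'a \<Rightarrow> ('a \<Rightarrow>\<^sub>L real) set" where
  "dual_normal_cone C x = {f. \<forall>y\<in>C. blinfun_apply f (y - x) \<le> 0}"

definition psim :: "('a::real_normed_vector) \<times> ('a \<Rightarrow>\<^sub>L real) \<Rightarrow> 'a \<times> ('a \<Rightarrow>\<^sub>L real) \<Rightarrow> bool" where
  "psim p q = (case p of (x, f) \<Rightarrow> case q of (y, g) \<Rightarrow>
      min (blinfun_apply g (x - y)) (blinfun_apply f (y - x)) < 0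
      \<or> (blinfun_apply g (x - y) = 0 \<and> blinfun_apply f (y - x) = 0))"

definition pm_polar :: "('a::real_normed_vector) mop \<Rightarrow> 'a mop" where
  "pm_polar T = {p. \<forall>q\<in>T. psim p q}"

definition polar_restr :: "('a::real_normed_vector) mop \<Rightarrow> 'a set \<Rightarrow> 'a mop" where
  "polar_restr S D = {(x, f). (x, f) \<in> pm_polar S \<and> x \<in> D}"

definition pseudomonotone_op :: "('a::real_normed_vector) mop \<Rightarrow> bool" where
  "pseudomonotone_op T = (\<forall>x f y g. (x, f) \<in> T \<longrightarrow> (y, g) \<in> T \<longrightarrow>
      blinfun_apply f (y - x) \<ge> 0 \<longrightarrow> blinfun_apply g (y - x) \<ge> 0)"

definition lev_set :: "('a::real_normed_vector) mop \<Rightarrow> 'a \<Rightarrow> 'a set" where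
  "lev_set T x = {y. \<exists>g\<in>op_val T y. blinfun_apply g (x - y) \<ge> 0}"

definition hat_op :: "('a::real_normed_vector) mop \<Rightarrow> 'a mop" where
  "hat_op T = {(x, f). (x \<in> op_zeros T \<and> f \<in> dual_normal_cone (lev_set T x) x)
      \<or> (x \<in> op_dom T - op_zeros T \<and> f \<in> open_cone (op_val T x))}"

end

theory Submission
  imports Defs
begin

lemma psim_scale:
  assumes "t > 0"
  shows "psim p (y, t *\<^sub>R g) = psim p (y, g)"
proof -
  obtain x f where p: "p = (x, f)" by (cases p)
  have "\<And>w. blinfun_apply (t *\<^sub>R g) w = t * blinfun_apply g w" by (simp add: scaleR_blinfun.rep_eq)
  moreover have "\<And>a. (t * a < 0) = (a < 0)" "\<And>a. (t * a = 0) = (a = 0)"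
    using assms by (auto simp: mult_less_0_iff)
  ultimately show ?thesis unfolding p psim_def min_less_iff_disj by simp
qed

lemma half_half: "(1/2::real) *\<^sub>R v + (1/2) *\<^sub>R v = (v::'a::real_vector)"
  by (simp add: scaleR_add_left[symmetric])

lemma T_sub_hat:
  assumes pm: "pseudomonotone_op T"
  shows "T \<subseteq> hat_op T"
proof
  fix p assume pT: "p \<in> T"
  obtain y g where p: "p = (y, g)" by (cases p)
  have yd: "y \<in> op_dom T" using pT p by (auto simp: op_dom_def op_val_def)
  show "p \<in> hat_op T"
  proof (cases "y \<in> op_zeros T")
    case True
    have "g \<in> dual_normal_cone (lev_set T y) y"
      unfolding dual_normal_cone_def
    proof (intro CollectI ballI)
      fix z assume "z \<in> lev_set T y"
      then obtain h where h: "(z, h) \<in> T" "blinfun_apply h (y - z) \<ge> 0"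
        by (auto simp: lev_set_def op_val_def)
      have "blinfun_apply g (y - z) \<ge> 0"
        using pm h pT p unfolding pseudomonotone_op_def by blast
      moreover have "blinfun_apply g (z - y) = - blinfun_apply g (y - z)"
        by (metis blinfun.minus_right minus_diff_eq)
      ultimately show "blinfun_apply g (z - y) \<le> 0" by simp
    qed
    then show ?thesis using True p by (simp add: hat_op_def)
  next
    case False
    have "g \<in> open_cone (op_val T y)"
      unfolding open_cone_def op_val_def
      using pT p by (auto intro!: exI[of _ 1] exI[of _ g])
    then show ?thesis using False yd p by (simp add: hat_op_def)
  qed
qed

lemma dom_hat:
  "op_dom (hat_op T) = op_dom T"
proof
  show "op_dom (hat_op T) \<subseteq> op_dom T"
    by (auto simp: op_dom_def op_val_def hat_op_def op_zeros_def)
  show "op_dom T \<subseteq> op_dom (hat_op T)"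
  proof
    fix x assume x: "x \<in> op_dom T"
    show "x \<in> op_dom (hat_op T)"
    proof (cases "x \<in> op_zeros T")
      case True
      have "0 \<in> dual_normal_cone (lev_set T x) x" by (simp add: dual_normal_cone_def)
      then have "(x, 0) \<in> hat_op T" using True by (simp add: hat_op_def)
      then show ?thesis by (auto simp: op_dom_def op_val_def)
    next
      case False
      from x obtain g where g: "g \<in> op_val T x" by (auto simp: op_dom_def)
      have "g \<in> open_cone (op_val T x)"
        unfolding open_cone_def using g by (auto intro!: exI[of _ 1] exI[of _ g])
      then have "(x, g) \<in> hat_op T" using False x by (simp add: hat_op_def)
      then show ?thesis by (auto simp: op_dom_def op_val_def)
    qed
  qed
qed

lemma key:
  fixes T :: "('a::banach) mop"
  assumes cv: "convex (op_dom T)"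
    and xf: "(x, f) \<in> pm_polar T" and xd: "x \<in> op_dom T"
    and yg: "(y, g) \<in> hat_op T"
  shows "psim (x, f) (y, g)"
proof (cases "y \<in> op_zeros T")
  case True
  then have g: "g \<in> dual_normal_cone (lev_set T y) y" using yg by (simp add: hat_op_def)
  have y0: "(y, 0) \<in> T" using True by (simp add: op_zeros_def op_val_def)
  then have yd: "y \<in> op_dom T" by (auto simp: op_dom_def op_val_def)
  have "psim (x, f) (y, 0)" using xf y0 by (simp add: pm_polar_def)
  then have fle: "blinfun_apply f (y - x) \<le> 0" by (auto simp: psim_def min_def split: if_splits)
  show ?thesis
  proof (cases "blinfun_apply f (y - x) < 0")
    case True
    then show ?thesis by (simp add: psim_def min_def)
  next
    case False
    then have f0: "blinfun_apply f (y - x) = 0" using fle by simp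
    define z where "z = (1/2) *\<^sub>R x + (1/2) *\<^sub>R y"
    have zd: "z \<in> op_dom T" unfolding z_def
      using cv xd yd by (intro convexD) auto
    then obtain h where h: "(z, h) \<in> T" by (auto simp: op_dom_def op_val_def)
    have e1: "z - x = (1/2) *\<^sub>R (y - x)" unfolding z_def by (metis (no_types, lifting) half_half scaleR_diff_right add_diff_cancel_left add_diff_cancel_right diff_add_eq diff_diff_eq2 add.commute scaleR_minus_right minus_diff_eq)
    have e2: "x - z = (1/2) *\<^sub>R (x - y)" unfolding z_def by (metis (no_types, lifting) half_half scaleR_diff_right add_diff_cancel_left add_diff_cancel_right diff_add_eq diff_diff_eq2 add.commute scaleR_minus_right minus_diff_eq)
    have e3: "y - z = - ((1/2) *\<^sub>R (x - y))" unfolding z_def by (metis (no_types, lifting) half_half scaleR_diff_right add_diff_cancel_left add_diff_cancel_right diff_add_eq diff_diff_eq2 add.commute scaleR_minus_right minus_diff_eq)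
    have e4: "z - y = (1/2) *\<^sub>R (x - y)" unfolding z_def by (metis (no_types, lifting) half_half scaleR_diff_right add_diff_cancel_left add_diff_cancel_right diff_add_eq diff_diff_eq2 add.commute scaleR_minus_right minus_diff_eq)
    have "psim (x, f) (z, h)" using xf h by (simp add: pm_polar_def)
    moreover have "blinfun_apply f (z - x) = 0" using f0 e1 by (simp add: blinfun.scaleR_right)
    ultimately have "blinfun_apply h (x - z) \<le> 0" by (auto simp: psim_def min_def split: if_splits)
    then have "blinfun_apply h (y - z) \<ge> 0"
      using e2 e3 by (simp add: blinfun.scaleR_right blinfun.minus_right)
    then have "z \<in> lev_set T y" using h by (auto simp: lev_set_def op_val_def)
    then have "blinfun_apply g (z - y) \<le> 0" using g by (auto simp: dual_normal_cone_def)
    then have "blinfun_apply g (x - y) \<le> 0" using e4 by (simp add: blinfun.scaleR_right)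
    then show ?thesis using f0
      by (auto simp: psim_def min_def)
  qed
next
  case False
  then have "g \<in> open_cone (op_val T y)" using yg by (simp add: hat_op_def)
  then obtain t v where tv: "g = t *\<^sub>R v" "t > 0" "(y, v) \<in> T"
    by (auto simp: open_cone_def op_val_def)
  have "psim (x, f) (y, v)" using xf tv by (simp add: pm_polar_def)
  then show ?thesis using tv psim_scale by metis
qed

theorem mainTheorem14:
  fixes T :: "('a::banach) mop"
  assumes "pseudomonotone_op T"
    and "convex (op_dom T)"
  shows "polar_restr (hat_op T) (op_dom (hat_op T)) = polar_restr T (op_dom T)"
proof -
  have sub: "T \<subseteq> hat_op T" using T_sub_hat assms(1) .
  show ?thesis
    unfolding dom_hat
  proof
    show "polar_restr (hat_op T) (op_dom T) \<subseteq> polar_restr T (op_dom T)"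
      using sub by (auto simp: polar_restr_def pm_polar_def)
    show "polar_restr T (op_dom T) \<subseteq> polar_restr (hat_op T) (op_dom T)"
    proof
      fix p assume p: "p \<in> polar_restr T (op_dom T)"
      obtain x f where pe: "p = (x, f)" by (cases p)
      have xf: "(x, f) \<in> pm_polar T" and xd: "x \<in> op_dom T"
        using p pe by (auto simp: polar_restr_def)
      have "(x, f) \<in> pm_polar (hat_op T)"
        unfolding pm_polar_def
      proof (intro CollectI ballI)
        fix q assume "q \<in> hat_op T"
        then show "psim (x, f) q"
          using key[OF assms(2) xf xd] by (cases q) auto
      qed
      then show "p \<in> polar_restr (hat_op T) (op_dom T)"
        using pe xd by (simp add: polar_restr_def)
    qed
  qed
qed

end
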